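(* Let $D$ be a strong nonseparable digraph and let $(D_0,D_1,\ldots,D_k)$ be an ear decomposition of $D$. Let $i\in\{0,\ldots,k-1\}$ and let $P_i=(x_0,x_1,\ldots,x_{r-1},x_r)$ be the ear of $D_i$ in $D$ (so $D_{i+1}=D_i\cup P_i$), with $l(P_i)\geq 2$. If $D_i$ has a kernel $N$ but $D_{i+1}$ has no kernel, then one of the following holds: (1) $x_0,x_r\in N$ and $l(P_i)$ is odd; (2) $x_0\in N$, $x_r\notin N$ and $l(P_i)$ is even.
   Context: All digraphs are finite, without loops or multiple arcs. Paths and cycles are directed; the length $l(P)$ of a path $P$ is its number of arcs. A digraph is strong if for every ordered pair of vertices $x,y$ there is a directed path from $x$ to $y$; it is nonseparable if its underlying undirected graph is nonseparable (has no cut vertex). For a subdigraph $H$ of $D$, an ear of $H$ in $D$ is a directed path $(x_0,\ldots,x_r)$ in $D$ whose end vertices lie in $H$ and whose internal vertices do not lie in $H$. An ear decomposition of a nonseparable strong digraph $D$ is a sequence $(D_0,\ldots,D_k)$ of nonseparable strong subdigraphs of $D$ such that $D_0$ is a directed cycle, $D_{j+1}=D_j\cup P_j$ with $P_j$ an ear of $D_j$ in $D$ for each $j\in\{0,\ldots,k-1\}$, and $D_k=D$. A kernel of a digraph is a set $N$ of vertices that is independent (no arc between two of its vertices) and absorbent (every vertex not in $N$ has an out-neighbour in $N$). *)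

theory Defs
  imports Main
begin

text \<open>A digraph is given by a vertex set V and an arc set A of ordered pairs.
  Finite, loopless; multiple arcs are excluded by representing arcs as a set of pairs.\<close>

definition digraph :: "'a set \<Rightarrow> ('a \<times> 'a) set \<Rightarrow> bool" where
  "digraph V A \<longleftrightarrow> finite V \<and> A \<subseteq> V \<times> V \<and> (\<forall>x. (x, x) \<notin> A)"

definition subdigraph :: "'a set \<Rightarrow> ('a \<times> 'a) set \<Rightarrow> 'a set \<Rightarrow> ('a \<times> 'a) set \<Rightarrow> bool" where
  "subdigraph H B V A \<longleftrightarrow> H \<subseteq> V \<and> B \<subseteq> A \<and> B \<subseteq> H \<times> H"

definition dpath :: "('a \<times> 'a) set \<Rightarrow> 'a list \<Rightarrow> bool" where
  "dpath A xs \<longleftrightarrow> xs \<noteq> [] \<and> distinct xs \<and> (\<forall>j. Suc j < length xs \<longrightarrow> (xs ! j, xs ! Suc j) \<in> A)"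

definition path_len :: "'a list \<Rightarrow> nat" where
  "path_len xs = length xs - 1"

definition path_arcs :: "'a list \<Rightarrow> ('a \<times> 'a) set" where
  "path_arcs xs = {(xs ! j, xs ! Suc j) | j. Suc j < length xs}"

definition strong :: "'a set \<Rightarrow> ('a \<times> 'a) set \<Rightarrow> bool" where
  "strong V A \<longleftrightarrow> (\<forall>x\<in>V. \<forall>y\<in>V. \<exists>xs. dpath A xs \<and> hd xs = x \<and> last xs = y)"

definition ug_connected :: "'a set \<Rightarrow> ('a \<times> 'a) set \<Rightarrow> bool" where
  "ug_connected V A \<longleftrightarrow>
     (\<forall>x\<in>V. \<forall>y\<in>V. (x, y) \<in> ((A \<union> A\<inverse>) \<inter> (V \<times> V))\<^sup>*)"

definition nonseparable :: "'a set \<Rightarrow> ('a \<times> 'a) set \<Rightarrow> bool" where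
  "nonseparable V A \<longleftrightarrow> ug_connected V A \<and>
     (\<forall>v\<in>V. ug_connected (V - {v}) (A \<inter> ((V - {v}) \<times> (V - {v}))))"

definition dcycle :: "'a set \<Rightarrow> ('a \<times> 'a) set \<Rightarrow> bool" where
  "dcycle V A \<longleftrightarrow> (\<exists>xs. distinct xs \<and> length xs \<ge> 2 \<and> V = set xs \<and>
     A = {(xs ! j, xs ! ((Suc j) mod length xs)) | j. j < length xs})"

definition ear :: "'a set \<Rightarrow> ('a \<times> 'a) set \<Rightarrow> 'a list \<Rightarrow> bool" where
  "ear H A P \<longleftrightarrow> dpath A P \<and> hd P \<in> H \<and> last P \<in> H \<and>
     (\<forall>j. 0 < j \<and> j < length P - 1 \<longrightarrow> P ! j \<notin> H)"

text \<open>Ear decomposition (D_0,...,D_k) with D_j = (VV j, AA j) and ears P_j = PP j.\<close>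
definition ear_decomposition ::
  "'a set \<Rightarrow> ('a \<times> 'a) set \<Rightarrow> (nat \<Rightarrow> 'a set) \<Rightarrow> (nat \<Rightarrow> ('a \<times> 'a) set) \<Rightarrow> (nat \<Rightarrow> 'a list) \<Rightarrow> nat \<Rightarrow> bool" where
  "ear_decomposition V A VV AA PP k \<longleftrightarrow>
     (\<forall>j\<le>k. subdigraph (VV j) (AA j) V A \<and> nonseparable (VV j) (AA j) \<and> strong (VV j) (AA j)) \<and>
     dcycle (VV 0) (AA 0) \<and>
     (\<forall>j<k. ear (VV j) A (PP j) \<and>
            VV (Suc j) = VV j \<union> set (PP j) \<and> AA (Suc j) = AA j \<union> path_arcs (PP j)) \<and>
     VV k = V \<and> AA k = A"

definition kernel :: "'a set \<Rightarrow> ('a \<times> 'a) set \<Rightarrow> 'a set \<Rightarrow> bool" where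
  "kernel V A N \<longleftrightarrow> N \<subseteq> V \<and> (\<forall>x\<in>N. \<forall>y\<in>N. (x, y) \<notin> A) \<and>
     (\<forall>x\<in>V - N. \<exists>y\<in>N. (x, y) \<in> A)"

definition has_kernel :: "'a set \<Rightarrow> ('a \<times> 'a) set \<Rightarrow> bool" where
  "has_kernel V A \<longleftrightarrow> (\<exists>N. kernel V A N)"

end

theory Submission
  imports Defs
begin

lemma key:
  assumes dist: "distinct P" and len: "length P = Suc r" and r2: "r \<ge> 2"
    and h0: "P!0 \<in> H" and hr: "P!r \<in> H" and int: "\<forall>j. 0<j \<and> j<r \<longrightarrow> P!j \<notin> H"
    and ker: "kernel H B N" and BH: "B \<subseteq> H \<times> H"
    and neg: "\<not> ((P!0 \<in> N \<and> P!r \<in> N \<and> odd r) \<or> (P!0 \<in> N \<and> P!r \<notin> N \<and> even r))"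
  shows "kernel (H \<union> set P) (B \<union> path_arcs P)
           (N \<union> {P!j | j. 0<j \<and> j<r \<and> (even (r-j) = (P!r \<in> N))})"
    (is "kernel ?V ?A ?N")
proof -
  define f where "f j = (even (r-j) = (P!r \<in> N))" for j
  have NH: "N \<subseteq> H" using ker unfolding kernel_def by blast
  have memI: "P!j \<in> ?N \<longleftrightarrow> f j" if "0<j" "j\<le>r" for j
  proof (cases "j = r")
    case True
    have "P!r \<notin> {P!j | j. 0<j \<and> j<r \<and> (even (r-j) = (P!r \<in> N))}"
    proof
      assume "P!r \<in> {P!j | j. 0<j \<and> j<r \<and> (even (r-j) = (P!r \<in> N))}"
      then obtain j' where "0<j'" "j'<r" "P!r = P!j'" by blast
      then show False using dist len nth_eq_iff_index_eq by fastforce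
    qed
    moreover have "f r \<longleftrightarrow> P!r \<in> N" unfolding f_def by simp
    moreover have "P!r \<in> N \<longleftrightarrow> P!r \<in> ?N" using calculation(1) by blast
    ultimately show ?thesis using True by blast
  next
    case False
    then have jr: "j<r" using that by auto
    have nN: "P!j \<notin> N" using int NH that jr by blast
    have "P!j \<in> {P!j | j. 0<j \<and> j<r \<and> (even (r-j) = (P!r \<in> N))} \<longleftrightarrow> f j"
    proof
      assume "P!j \<in> {P!j | j. 0<j \<and> j<r \<and> (even (r-j) = (P!r \<in> N))}"
      then obtain j' where "0<j'" "j'<r" "P!j = P!j'" "even (r-j') = (P!r \<in> N)" by blast
      moreover have "j = j'" using calculation dist len jr nth_eq_iff_index_eq by fastforce
      ultimately show "f j" using f_def by simp
    next
      assume "f j" then show "P!j \<in> {P!j | j. 0<j \<and> j<r \<and> (even (r-j) = (P!r \<in> N))}"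
        using that jr f_def by blast
    qed
    then show ?thesis using nN by blast
  qed
  have alt: "f j \<longleftrightarrow> \<not> f (Suc j)" if "j<r" for j
    using that unfolding f_def by (simp add: Suc_diff_Suc less_imp_le_nat) blast
  have N0: "P!0 \<in> ?N \<longleftrightarrow> P!0 \<in> N"
    using h0 int by auto
  have f1: "\<not> (P!0 \<in> N \<and> f 1)"
    using neg r2 unfolding f_def by (cases "P!r \<in> N") auto
  have setP: "set P = {P!j | j. j \<le> r}" using len
    by (auto simp: in_set_conv_nth less_Suc_eq_le)
  show ?thesis unfolding kernel_def
  proof (intro conjI ballI)
    show "?N \<subseteq> ?V" using NH setP r2 by auto
  next
    fix x y assume x: "x \<in> ?N" and y: "y \<in> ?N"
    show "(x, y) \<notin> ?A"
    proof
      assume "(x,y) \<in> ?A"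
      then consider "(x,y) \<in> B" | j where "x = P!j" "y = P!Suc j" "Suc j < length P"
        unfolding path_arcs_def by blast
      then show False
      proof cases
        case 1
        then have "x \<in> H" "y \<in> H" using BH by auto
        then have "x \<in> N" "y \<in> N" using x y int by auto
        then show False using ker 1 unfolding kernel_def by blast
      next
        case (2 j)
        show False
        proof (cases "j = 0")
          case True
          then show False using 2 x y N0 memI[of 1] r2 f1 by auto
        next
          case False
          have jr: "j < r" using 2(3) len by simp
          have "f j" using memI[of j] False jr x 2(1) by simp
          moreover have "f (Suc j)" using memI[of "Suc j"] jr y 2(2) by simp
          ultimately show False using alt[OF jr] by blast
        qed
      qed
    qed
  next
    fix x assume x: "x \<in> ?V - ?N"
    show "\<exists>y\<in>?N. (x, y) \<in> ?A"
    proof (cases "x \<in> H")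
      case True
      then have "x \<in> H - N" using x by auto
      then show ?thesis using ker unfolding kernel_def by blast
    next
      case False
      then obtain j where j: "x = P!j" "j \<le> r" using x setP by auto
      have "j \<noteq> 0" proof assume "j = 0" then show False using False h0 j(1) by simp qed
      moreover have "j \<noteq> r" proof assume "j = r" then show False using False hr j(1) by simp qed
      ultimately have "0 < j" "j < r" using j by auto
      then have m: "P!j \<in> ?N \<longleftrightarrow> f j" using memI[of j] by simp
      have "x \<notin> ?N" using x by blast
      then have "\<not> f j" using m j(1) by blast
      then have "f (Suc j)" using alt \<open>j<r\<close> by blast
      then have "P!Suc j \<in> ?N" using memI \<open>j<r\<close> by simp
      moreover have "(x, P!Suc j) \<in> path_arcs P" using j \<open>j<r\<close> len unfolding path_arcs_def by auto
      ultimately show ?thesis by blast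
    qed
  qed
qed

theorem mainTheorem12:
  fixes V :: "'a set" and A :: "('a \<times> 'a) set"
    and VV :: "nat \<Rightarrow> 'a set" and AA :: "nat \<Rightarrow> ('a \<times> 'a) set" and PP :: "nat \<Rightarrow> 'a list"
    and k i :: nat and N :: "'a set"
  assumes "digraph V A" and "strong V A" and "nonseparable V A"
    and "ear_decomposition V A VV AA PP k"
    and "i < k"
    and "path_len (PP i) \<ge> 2"
    and "kernel (VV i) (AA i) N"
    and "\<not> has_kernel (VV (Suc i)) (AA (Suc i))"
  shows "(hd (PP i) \<in> N \<and> last (PP i) \<in> N \<and> odd (path_len (PP i))) \<or>
         (hd (PP i) \<in> N \<and> last (PP i) \<notin> N \<and> even (path_len (PP i)))"
proof (rule ccontr)
  assume neg: "\<not> ?thesis"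
  define P where "P = PP i"
  define r where "r = path_len P"
  have ed: "ear (VV i) A P" "VV (Suc i) = VV i \<union> set P" "AA (Suc i) = AA i \<union> path_arcs P"
    "subdigraph (VV i) (AA i) V A"
  proof -
    have e: "(\<forall>j\<le>k. subdigraph (VV j) (AA j) V A \<and> nonseparable (VV j) (AA j) \<and> strong (VV j) (AA j))"
      "(\<forall>j<k. ear (VV j) A (PP j) \<and>
            VV (Suc j) = VV j \<union> set (PP j) \<and> AA (Suc j) = AA j \<union> path_arcs (PP j))"
      using assms(4) unfolding ear_decomposition_def by blast+
    from e(2) assms(5) have a: "ear (VV i) A (PP i) \<and>
            VV (Suc i) = VV i \<union> set (PP i) \<and> AA (Suc i) = AA i \<union> path_arcs (PP i)" by blast
    from e(1) assms(5) have b: "subdigraph (VV i) (AA i) V A" by simp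
    show "ear (VV i) A P" "VV (Suc i) = VV i \<union> set P" "AA (Suc i) = AA i \<union> path_arcs P"
      "subdigraph (VV i) (AA i) V A" using a b unfolding P_def by blast+
  qed
  have ne: "P \<noteq> []" and dist: "distinct P" using ed(1) unfolding ear_def dpath_def by auto
  have len: "length P = Suc r" using ne unfolding r_def path_len_def by (cases P) auto
  have hd: "hd P = P!0" using ne by (simp add: hd_conv_nth)
  have lst: "last P = P!r" using ne len by (simp add: last_conv_nth)
  have int: "\<forall>j. 0<j \<and> j<r \<longrightarrow> P!j \<notin> VV i" using ed(1) len unfolding ear_def by auto
  have "kernel (VV i \<union> set P) (AA i \<union> path_arcs P)
           (N \<union> {P!j | j. 0<j \<and> j<r \<and> (even (r-j) = (P!r \<in> N))})"
  proof -
    have r2: "2 \<le> r" using assms(6) unfolding r_def P_def .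
    have e0: "P!0 \<in> VV i" using ed(1) hd unfolding ear_def by metis
    have er: "P!r \<in> VV i" using ed(1) lst unfolding ear_def by metis
    have kN: "kernel (VV i) (AA i) N" by (rule assms(7))
    have sub: "AA i \<subseteq> VV i \<times> VV i" using ed(4) unfolding subdigraph_def by blast
    have ng: "\<not> ((P!0 \<in> N \<and> P!r \<in> N \<and> odd r) \<or> (P!0 \<in> N \<and> P!r \<notin> N \<and> even r))"
    proof -
      have hd2: "hd (PP i) = P!0" and lst2: "last (PP i) = P!r" and pl: "path_len (PP i) = r"
        using hd lst unfolding P_def r_def by auto
      show ?thesis using neg unfolding hd2 lst2 pl .
    qed
    show ?thesis by (rule key[OF dist len r2 e0 er int kN sub ng])
  qed
  then show False using assms(8) ed(2,3) unfolding has_kernel_def by auto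
qed

end
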